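(* Let $\mathbb{K}$ be a field of characteristic $0$. Suppose $H^*$ is a $2n$-dimensional Poincaré graded (commutative) algebra over $\mathbb{K}$ with $H^0=\mathbb{K}$, and $H^i$ is nontrivial only when $i$ is even and $0\le i\le 2n$. If the multiplication map $H^i\otimes H^j\to H^{i+j}$ is injective for all $i,j\le n$, then $H^*\cong\mathbb{K}[x]/(x^p)$ is a quotient of the polynomial ring in a single (homogeneous) variable.
   Context: A finite-dimensional graded commutative algebra $H$ is $m$-dimensional Poincaré if there exists $\alpha_H\in(H^m)^\vee$ such that $H^i\to(H^{m-i})^\vee$, $x\mapsto(y\mapsto\alpha_H(xy))$, is an isomorphism for all $i$. *)

theory Defs
  imports Main "HOL-Computational_Algebra.Polynomial"
begin

definition k_algebra :: "('k::field \<Rightarrow> 'a::comm_ring_1 \<Rightarrow> 'a) \<Rightarrow> bool" where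
  "k_algebra scale \<longleftrightarrow> vector_space scale \<and> (\<forall>c x y. scale c (x * y) = scale c x * y)"

definition fin_graded_algebra :: "('k::field \<Rightarrow> 'a::comm_ring_1 \<Rightarrow> 'a) \<Rightarrow> (nat \<Rightarrow> 'a set) \<Rightarrow> bool" where
  "fin_graded_algebra scale H \<longleftrightarrow>
     k_algebra scale \<and>
     (\<forall>i. module.subspace scale (H i)) \<and>
     (\<forall>i. \<exists>B. finite B \<and> B \<subseteq> H i \<and> module.span scale B = H i) \<and>
     (\<exists>N. \<forall>i>N. H i = {0}) \<and>
     (\<forall>x. \<exists>!f. (\<forall>i. f i \<in> H i) \<and> finite {i. f i \<noteq> 0} \<and> x = sum f {i. f i \<noteq> 0}) \<and>
     1 \<in> H 0 \<and>
     (\<forall>i j. \<forall>x\<in>H i. \<forall>y\<in>H j. x * y \<in> H (i + j))"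

text \<open>Linear functionals on a subspace V (elements of the dual space V^\<or>,
identified when they agree on V).\<close>

definition lin_functional :: "('k::field \<Rightarrow> 'a::comm_ring_1 \<Rightarrow> 'a) \<Rightarrow> 'a set \<Rightarrow> ('a \<Rightarrow> 'k) \<Rightarrow> bool" where
  "lin_functional scale V \<phi> \<longleftrightarrow>
     (\<forall>x\<in>V. \<forall>y\<in>V. \<phi> (x + y) = \<phi> x + \<phi> y) \<and> (\<forall>c. \<forall>x\<in>V. \<phi> (scale c x) = c * \<phi> x)"

text \<open>m-dimensional Poincare: there is alpha in (H^m)^\<or> such that for every degree i
the (linear) map H^i \<rightarrow> (H^(m-i))^\<or>, x \<mapsto> (y \<mapsto> alpha(xy)) is bijective. For i > m the
target is the dual of the zero space, so this says H i = 0.\<close>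

definition poincare :: "('k::field \<Rightarrow> 'a::comm_ring_1 \<Rightarrow> 'a) \<Rightarrow> (nat \<Rightarrow> 'a set) \<Rightarrow> nat \<Rightarrow> bool" where
  "poincare scale H m \<longleftrightarrow>
     (\<exists>\<alpha>. lin_functional scale (H m) \<alpha> \<and>
        (\<forall>i>m. H i = {0}) \<and>
        (\<forall>i\<le>m.
           (\<forall>x\<in>H i. (\<forall>y\<in>H (m - i). \<alpha> (x * y) = 0) \<longrightarrow> x = 0) \<and>
           (\<forall>\<phi>. lin_functional scale (H (m - i)) \<phi> \<longrightarrow>
                 (\<exists>x\<in>H i. \<forall>y\<in>H (m - i). \<phi> y = \<alpha> (x * y)))))"

text \<open>Injectivity of the multiplication map H^i \<otimes> H^j \<rightarrow> H^(i+j). Its image is the span of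
all products x*y, and the source has dimension dim H^i * dim H^j, so (finite
dimensions) injectivity means the image has that dimension.\<close>

definition mult_injective :: "('k::field \<Rightarrow> 'a::comm_ring_1 \<Rightarrow> 'a) \<Rightarrow> (nat \<Rightarrow> 'a set) \<Rightarrow> nat \<Rightarrow> nat \<Rightarrow> bool" where
  "mult_injective scale H i j \<longleftrightarrow>
     vector_space.dim scale (module.span scale {x * y | x y. x \<in> H i \<and> y \<in> H j})
       = vector_space.dim scale (H i) * vector_space.dim scale (H j)"

definition poly_eval :: "('k::field \<Rightarrow> 'a::comm_ring_1 \<Rightarrow> 'a) \<Rightarrow> 'a \<Rightarrow> 'k poly \<Rightarrow> 'a" where
  "poly_eval scale x f = (\<Sum>i\<le>degree f. scale (coeff f i) (x ^ i))"

end

theory Submission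
  imports Defs
begin


lemma comb_main:
  fixes S :: "nat set" and n d :: nat
  assumes S0: "0 \<in> S" and Sb: "\<forall>i\<in>S. i \<le> 2*n" and SP: "\<forall>i\<in>S. 2*n - i \<in> S"
   and SQ: "\<forall>a\<in>S. \<forall>b\<in>S. a \<le> n \<longrightarrow> b \<le> n \<longrightarrow> a+b \<in> S"
   and dS: "d \<in> S" and dpos: "0 < d" and dmin: "\<forall>i\<in>S. 0 < i \<longrightarrow> d \<le> i"
  shows "(\<forall>i\<in>S. i \<le> n \<longrightarrow> d dvd i) \<and> d dvd 2*n"
proof -
  define T where "T = {i\<in>S. i \<le> n}"
  have finT: "finite T" unfolding T_def by (rule finite_subset[of _ "{..n}"]) auto
  have T0: "0 \<in> T" using S0 T_def by auto
  define m where "m = Max T"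
  have mT: "m \<in> T" unfolding m_def using finT T0 Max_in by blast
  have mS: "m \<in> S" and mn: "m \<le> n" using mT T_def by auto
  have mmax: "\<And>i. i \<in> S \<Longrightarrow> i \<le> n \<Longrightarrow> i \<le> m" unfolding m_def using finT T_def by auto
  have key: "2*n - m - a \<in> S \<and> 2*n - m - a < n \<and> n < m + a" if "a \<in> S" "0 < a" "a \<le> n" for a
  proof -
    have "m + a \<in> S" using SQ mS mn that by blast
    moreover have "n < m + a"
    proof (rule ccontr)
      assume "\<not> n < m + a"
      then have "m + a \<le> m" using mmax[of "m+a"] \<open>m + a \<in> S\<close> by simp
      then show False using \<open>0 < a\<close> by simp
    qed
    moreover have "2*n - (m+a) \<in> S" using SP calculation by blast
    ultimately show ?thesis using mn \<open>a \<le> n\<close> by (simp add: diff_diff_left)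
  qed
  have A: "\<forall>i\<in>S. i \<le> n \<longrightarrow> d dvd i"
  proof (rule ccontr)
    assume "\<not> ?thesis"
    then obtain j0 where "j0 \<in> S" "j0 \<le> n" "\<not> d dvd j0" by blast
    define j where "j = (LEAST j. j \<in> S \<and> j \<le> n \<and> \<not> d dvd j)"
    have jP: "j \<in> S \<and> j \<le> n \<and> \<not> d dvd j" unfolding j_def
      by (rule LeastI[of _ j0]) (use \<open>j0 \<in> S\<close> \<open>j0 \<le> n\<close> \<open>\<not> d dvd j0\<close> in auto)
    have jmin: "\<And>i. i \<in> S \<Longrightarrow> i \<le> n \<Longrightarrow> \<not> d dvd i \<Longrightarrow> j \<le> i" unfolding j_def
      by (rule Least_le) auto
    have jS: "j \<in> S" and jn: "j \<le> n" and jnd: "\<not> d dvd j" using jP by auto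
    have j0': "0 < j" using jnd by (cases j) auto
    have jd: "d < j" using dmin jS j0' jnd by (metis dvd_refl le_neq_implies_less)
    have jm: "j \<le> m" using mmax jS jn by auto
    have contr: "j - d \<notin> S"
    proof
      assume "j - d \<in> S"
      moreover have "\<not> d dvd (j - d)"
        using jnd jd by (metis dvd_add_right_iff dvd_refl le_add_diff_inverse2 less_imp_le_nat add.commute)
      ultimately have "j \<le> j - d" using jmin jn by auto
      then show False using jd dpos by simp
    qed
    have dn: "d \<le> n" using jd jn by simp
    show False
    proof (cases "m = n")
      case True
      have refl: "n - b \<in> S" if "b \<in> S" "b \<le> n" for b
      proof (cases "b = 0")
        case True then show ?thesis using mS \<open>m = n\<close> by simp
      next
        case False then show ?thesis using key[of b] that \<open>m = n\<close> by simp
      qed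
      have "n - j \<in> S" using refl jS jn by blast
      then have "n - j + d \<in> S" using SQ dS dn by auto
      moreover have "n - j + d \<le> n" using jd jn by simp
      ultimately have "n - (n - j + d) \<in> S" using refl by blast
      moreover have "n - (n - j + d) = j - d" using jd jn by simp
      ultimately show False using contr by simp
    next
      case False
      then have mlt: "m < n" using mn by simp
      have m0: "0 < m" using jm j0' by simp
      have "2*n - m - d \<in> S" "2*n - m - d < n" using key[of d] dS dpos dn by auto
      then have "2*n - m - d \<le> m" using mmax[of "2*n - m - d"] by simp
      moreover have "2*n - m - m \<in> S" using key[of m] mS m0 mn by auto
      then have "d \<le> 2*n - m - m" using dmin mlt by simp
      ultimately have eq: "2*n = 2*m + d" using mlt by linarith
      have phj: "m + d - j \<in> S" using key[of j] jS j0' jn eq by simp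
      have "m + d - j \<le> n" using key[of j] jS j0' jn eq by simp
      then have bS: "m + d - j + d \<in> S" using SQ phj dS dn by blast
      show False
      proof (cases "m + d - j + d \<le> n")
        case True
        then have "2*n - m - (m + d - j + d) \<in> S" using key[of "m + d - j + d"] bS dpos by simp
        moreover have "2*n - m - (m + d - j + d) = j - d" using eq jm jd by simp
        ultimately show False using contr by simp
      next
        case False
        then have "2*n - (m + d - j + d) \<in> S" using SP bS by blast
        moreover have "2*n - (m + d - j + d) = m + j - d" using eq jm jd by simp
        moreover have "m + j - d \<le> n" using False eq jm jd by simp
        ultimately have "m + j - d \<le> m" using mmax by auto
        then show False using jd by simp
      qed
    qed
  qed
  have B: "d dvd 2*n"
  proof -
    have dm: "d dvd m" using A mS mn by blast
    consider "m = n" | "m = 0" "m \<noteq> n" | "0 < m" "m < n" using mn by linarith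
    then show ?thesis
    proof cases
      case 1 then show ?thesis using dm by simp
    next
      case 2
      have "\<not> d \<le> n" using mmax[of d] dS dpos 2 by auto
      then have "2*n - d \<in> S" "2*n - d \<le> n" using SP dS by auto
      then have "2*n - d \<le> 0" using mmax[of "2*n - d"] 2 by simp
      moreover have "d \<le> 2*n" using Sb dS by blast
      ultimately have "d = 2*n" by simp
      then show ?thesis by simp
    next
      case 3
      have "d \<le> m" using dmin mS 3 by auto
      then have dn: "d \<le> n" using mn by simp
      have "2*n - m - d \<in> S" "2*n - m - d < n" using key[of d] dS dpos dn by auto
      then have "2*n - m - d \<le> m" using mmax[of "2*n - m - d"] by simp
      moreover have "2*n - m - m \<in> S" using key[of m] mS 3 by auto
      then have "d \<le> 2*n - m - m" using dmin 3 by simp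
      ultimately have eq: "2*n = 2*m + d" using 3 by linarith
      then show ?thesis using dm by simp
    qed
  qed
  show ?thesis using A B by blast
qed

lemma comb:
  fixes S :: "nat set" and n d :: nat
  assumes S0: "0 \<in> S" and Sb: "\<forall>i\<in>S. i \<le> 2*n" and SP: "\<forall>i\<in>S. 2*n - i \<in> S"
   and SQ: "\<forall>a\<in>S. \<forall>b\<in>S. a \<le> n \<longrightarrow> b \<le> n \<longrightarrow> a+b \<in> S"
   and dS: "d \<in> S" and dpos: "0 < d" and dmin: "\<forall>i\<in>S. 0 < i \<longrightarrow> d \<le> i"
  shows "(\<forall>i\<in>S. d dvd i) \<and> (\<forall>k. k*d \<le> 2*n \<longrightarrow> k*d \<in> S)"
proof -
  have A: "\<forall>i\<in>S. i \<le> n \<longrightarrow> d dvd i" and B: "d dvd 2*n"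
    using comb_main[OF assms] by auto
  have C: "\<forall>i\<in>S. d dvd i"
  proof
    fix i assume "i \<in> S"
    show "d dvd i"
    proof (cases "i \<le> n")
      case True then show ?thesis using A \<open>i \<in> S\<close> by blast
    next
      case False
      then have "2*n - i \<in> S" "2*n - i \<le> n" using SP \<open>i \<in> S\<close> by auto
      then have "d dvd 2*n - i" using A by blast
      moreover have "i \<le> 2*n" using Sb \<open>i \<in> S\<close> by blast
      ultimately show ?thesis using B by (metis diff_diff_cancel dvd_diff_nat)
    qed
  qed
  have low: "k*d \<le> n \<longrightarrow> k*d \<in> S" for k
  proof (induction k)
    case 0 then show ?case using S0 by simp
  next
    case (Suc k)
    show ?case
    proof
      assume h: "Suc k * d \<le> n"
      then have "k*d \<in> S" "k * d \<le> n" "d \<le> n" using Suc by auto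
      then have "k*d + d \<in> S" using SQ dS by blast
      then show "Suc k * d \<in> S" by (simp add: add.commute)
    qed
  qed
  have "k*d \<in> S" if "k*d \<le> 2*n" for k
  proof (cases "k*d \<le> n")
    case True then show ?thesis using low by blast
  next
    case False
    obtain q where q: "2*n = d * q" using B by (auto elim: dvdE)
    have "2*n - k*d = (q - k)*d" using q by (metis diff_mult_distrib2 mult.commute)
    moreover have "2*n - k*d \<le> n" using False by simp
    ultimately have "2*n - k*d \<in> S" using low by simp
    then have "2*n - (2*n - k*d) \<in> S" using SP by blast
    then show ?thesis using that by simp
  qed
  then show ?thesis using C by blast
qed


locale PA =
  fixes scale :: "'k::field_char_0 \<Rightarrow> 'a::comm_ring_1 \<Rightarrow> 'a"
    and H :: "nat \<Rightarrow> 'a set"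
    and n :: nat
  assumes fga: "fin_graded_algebra scale H"
    and pc: "poincare scale H (2 * n)"
    and H0: "H 0 = range (\<lambda>c. scale c 1)" and one_nz: "(1::'a) \<noteq> 0"
    and Hodd: "\<forall>i. (odd i \<or> i > 2 * n) \<longrightarrow> H i = {0}"
    and mi: "\<forall>i j. i \<le> n \<longrightarrow> j \<le> n \<longrightarrow> mult_injective scale H i j"
begin

lemma VS: "vector_space scale" using fga unfolding fin_graded_algebra_def k_algebra_def by blast

sublocale vector_space scale by (rule VS)

lemma sc_l: "scale c x * y = scale c (x * y)"
  using fga unfolding fin_graded_algebra_def k_algebra_def by metis

lemma sc_r: "x * scale c y = scale c (x * y)"
  using sc_l[of c y x] by (simp add: mult.commute)

lemma subH: "subspace (H i)"
  using fga unfolding fin_graded_algebra_def by blast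

lemma Hmul: "x \<in> H i \<Longrightarrow> y \<in> H j \<Longrightarrow> x * y \<in> H (i + j)"
  using fga unfolding fin_graded_algebra_def by blast

lemma Hfin: "\<exists>B. finite B \<and> B \<subseteq> H i \<and> span B = H i"
  using fga unfolding fin_graded_algebra_def by blast

lemma Hdec: "\<forall>x. \<exists>!f. (\<forall>i. f i \<in> H i) \<and> finite {i. f i \<noteq> 0} \<and> x = sum f {i. f i \<noteq> 0}"
  using fga unfolding fin_graded_algebra_def by blast

lemma one_H: "1 \<in> H 0"
  using fga unfolding fin_graded_algebra_def by blast

lemma Hbig: "2 * n < i \<Longrightarrow> H i = {0}" using Hodd by blast

lemma zero_H: "0 \<in> H i" using subH subspace_0 by blast

lemma prod_span:
  assumes "x \<in> span A" "y \<in> span B" "finite A" "finite B"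
  shows "x * y \<in> span {a * b | a b. a \<in> A \<and> b \<in> B}"
proof -
  let ?Q = "{a * b | a b. a \<in> A \<and> b \<in> B}"
  obtain u where u: "x = (\<Sum>a\<in>A. scale (u a) a)" using assms(1,3) span_finite by auto
  obtain v where v: "y = (\<Sum>b\<in>B. scale (v b) b)" using assms(2,4) span_finite by auto
  have "x * y = (\<Sum>a\<in>A. \<Sum>b\<in>B. scale (u a) a * scale (v b) b)"
    unfolding u v by (rule sum_product)
  also have "\<dots> = (\<Sum>a\<in>A. \<Sum>b\<in>B. scale (u a * v b) (a * b))"
    by (simp add: sc_l sc_r mult.commute[of "v _" "u _"])
  also have "\<dots> \<in> span ?Q"
    by (intro span_sum span_scale span_base) blast
  finally show ?thesis .
qed

definition lin1 :: "nat \<Rightarrow> bool" where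
  "lin1 i \<longleftrightarrow> (\<forall>u\<in>H i. \<forall>v\<in>H i. v \<noteq> 0 \<longrightarrow> (\<exists>c. u = scale c v))"

lemma lin1_span: "lin1 i \<Longrightarrow> v \<in> H i \<Longrightarrow> v \<noteq> 0 \<Longrightarrow> H i = span {v}"
proof -
  assume a: "lin1 i" "v \<in> H i" "v \<noteq> 0"
  show "H i = span {v}"
  proof
    show "H i \<subseteq> span {v}"
    proof
      fix u assume "u \<in> H i"
      then obtain c where "u = scale c v" using a unfolding lin1_def by blast
      then show "u \<in> span {v}" unfolding span_singleton by blast
    qed
    show "span {v} \<subseteq> H i" using subH a(2) subspace_scale by (auto simp: span_singleton)
  qed
qed

lemma L1: assumes "i \<le> n" shows "lin1 i"
proof (rule ccontr)
  assume "\<not> lin1 i"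
  then obtain u v where uv: "u \<in> H i" "v \<in> H i" "v \<noteq> 0" "\<forall>c. u \<noteq> scale c v"
    unfolding lin1_def by blast
  have une: "u \<noteq> v" using uv(4)[rule_format, of 1] by auto
  have "u \<notin> span {v}" using uv(4) by (auto simp: span_singleton)
  moreover have "independent {v}" using uv(3) by simp
  ultimately have ind: "independent {u, v}" by (rule independent_insertI)
  obtain B where B: "{u, v} \<subseteq> B" "B \<subseteq> H i" "independent B" "H i \<subseteq> span B"
    using maximal_independent_subset_extend[of "{u,v}" "H i"] uv ind by auto
  obtain B0 where B0: "finite B0" "B0 \<subseteq> H i" "span B0 = H i" using Hfin by blast
  have finB: "finite B" using independent_span_bound[of B0 B] B0 B by auto
  have cardB: "card B = dim (H i)" using basis_card_eq_dim B by blast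
  have c2: "2 \<le> card B" using card_mono[OF finB B(1)] une by simp
  let ?P = "{x * y | x y. x \<in> H i \<and> y \<in> H i}"
  let ?Q = "{a * b | a b. a \<in> B \<and> b \<in> B}"
  let ?f = "\<lambda>(a, b). a * b"
  have "?P \<subseteq> span ?Q"
  proof
    fix z assume "z \<in> ?P"
    then obtain x y where "z = x * y" "x \<in> span B" "y \<in> span B" using B(4) by blast
    then show "z \<in> span ?Q" using prod_span finB by blast
  qed
  have Qeq: "?Q = ?f ` (B \<times> B - {(v, u)})"
  proof
    show "?f ` (B \<times> B - {(v, u)}) \<subseteq> ?Q" by auto
    show "?Q \<subseteq> ?f ` (B \<times> B - {(v, u)})"
    proof
      fix z assume "z \<in> ?Q"
      then obtain a b where ab: "z = a * b" "a \<in> B" "b \<in> B" by blast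
      show "z \<in> ?f ` (B \<times> B - {(v, u)})"
      proof (cases "(a, b) = (v, u)")
        case True
        then have "z = ?f (u, v)" using ab by (simp add: mult.commute)
        moreover have "(u, v) \<in> B \<times> B - {(v, u)}" using B(1) une by auto
        ultimately show ?thesis by blast
      next
        case False
        then show ?thesis using ab by force
      qed
    qed
  qed
  have finQ: "finite ?Q" unfolding Qeq using finB by simp
  have "card ?Q \<le> card (B \<times> B - {(v, u)})" unfolding Qeq by (rule card_image_le) (simp add: finB)
  also have "\<dots> = card B * card B - 1" using B(1) finB by (simp add: card_cartesian_product)
  finally have cQ: "card ?Q \<le> card B * card B - 1" .
  have "dim (span ?P) \<le> card ?Q" unfolding dim_span using dim_le_card[OF \<open>?P \<subseteq> span ?Q\<close> finQ] .
  moreover have "dim (span ?P) = card B * card B"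
    using mi assms cardB unfolding mult_injective_def by simp
  moreover have "0 < card B * card B" using c2 by simp
  ultimately show False using cQ by linarith
qed

lemma dim_line: "v \<noteq> 0 \<Longrightarrow> dim (span {v}) = 1"
proof -
  assume "v \<noteq> 0"
  then have "independent {v}" by simp
  then show ?thesis using dim_span_eq_card_independent[of "{v}"] by simp
qed

lemma Qalg:
  assumes "i \<le> n" "j \<le> n" "u \<in> H i" "v \<in> H j" "u \<noteq> 0" "v \<noteq> 0"
  shows "u * v \<noteq> 0"
proof
  assume uv0: "u * v = 0"
  have Hi: "H i = span {u}" using lin1_span L1 assms by blast
  have Hj: "H j = span {v}" using lin1_span L1 assms by blast
  let ?P = "{x * y | x y. x \<in> H i \<and> y \<in> H j}"
  have "?P \<subseteq> span {}"
  proof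
    fix z assume "z \<in> ?P"
    then obtain x y where "z = x * y" "x \<in> span {u}" "y \<in> span {v}" using Hi Hj by blast
    then have "z \<in> span {a * b | a b. a \<in> {u} \<and> b \<in> {v}}" using prod_span by blast
    then show "z \<in> span {}" using uv0 by simp
  qed
  then have "dim (span ?P) \<le> 0" unfolding dim_span using dim_le_card[of ?P "{}"] by simp
  moreover have "dim (span ?P) = dim (H i) * dim (H j)"
    using mi assms(1,2) unfolding mult_injective_def by blast
  moreover have "dim (H i) = 1" "dim (H j) = 1" using Hi Hj dim_line assms by auto
  ultimately show False by simp
qed


definition alpha :: "'a \<Rightarrow> 'k" where
  "alpha = (SOME \<alpha>. lin_functional scale (H (2*n)) \<alpha> \<and>
        (\<forall>i\<le>2*n. \<forall>x\<in>H i. (\<forall>y\<in>H (2*n - i). \<alpha> (x * y) = 0) \<longrightarrow> x = 0))"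

lemma alpha_prop: "lin_functional scale (H (2*n)) alpha \<and>
        (\<forall>i\<le>2*n. \<forall>x\<in>H i. (\<forall>y\<in>H (2*n - i). alpha (x * y) = 0) \<longrightarrow> x = 0)"
proof -
  have "\<exists>\<alpha>. lin_functional scale (H (2*n)) \<alpha> \<and>
        (\<forall>i\<le>2*n. \<forall>x\<in>H i. (\<forall>y\<in>H (2*n - i). \<alpha> (x * y) = 0) \<longrightarrow> x = 0)"
    using pc unfolding poincare_def by blast
  then show ?thesis unfolding alpha_def by (rule someI_ex)
qed

lemma al_add: "x \<in> H (2*n) \<Longrightarrow> y \<in> H (2*n) \<Longrightarrow> alpha (x + y) = alpha x + alpha y"
  using alpha_prop unfolding lin_functional_def by blast

lemma al_sc: "x \<in> H (2*n) \<Longrightarrow> alpha (scale c x) = c * alpha x"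
  using alpha_prop unfolding lin_functional_def by blast

lemma al_0: "alpha 0 = 0"
  using al_sc[of 0 0] zero_H by simp

lemma nd: assumes "i \<le> 2*n" "x \<in> H i" "x \<noteq> 0" shows "\<exists>y\<in>H (2*n - i). alpha (x * y) \<noteq> 0"
  using alpha_prop assms by blast

lemma L2: "lin1 i"
proof (cases "i \<le> n")
  case True then show ?thesis by (rule L1)
next
  case False
  show ?thesis
  proof (cases "i \<le> 2*n")
    case False
    then show ?thesis using Hbig unfolding lin1_def by auto
  next
    case True
    define j where "j = 2*n - i"
    have jn: "j \<le> n" using \<open>\<not> i \<le> n\<close> j_def by simp
    have ij: "2*n - i = j" "i + j = 2*n" using j_def True by auto
    show ?thesis unfolding lin1_def
    proof (intro ballI impI)
      fix u v assume uv: "u \<in> H i" "v \<in> H i" "v \<noteq> 0"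
      obtain y0 where y0: "y0 \<in> H j" "alpha (v * y0) \<noteq> 0" using nd[OF True uv(2,3)] ij by auto
      have "y0 \<noteq> 0" using y0 al_0 by auto
      then have Hj: "H j = span {y0}" using lin1_span L1[OF jn] y0 by blast
      define w where "w = y0"
      have wH: "w \<in> H j" using y0 w_def by simp
      define a where "a = alpha (u * w)"
      define c where "c = alpha (v * w)"
      have c0: "c \<noteq> 0" using y0 c_def w_def by simp
      define z where "z = u - scale (a / c) v"
      have zH: "z \<in> H i" unfolding z_def using subH uv subspace_diff subspace_scale by blast
      have "z = 0"
      proof (rule ccontr)
        assume "z \<noteq> 0"
        then obtain y where y: "y \<in> H j" "alpha (z * y) \<noteq> 0" using nd[OF True zH] ij by auto
        then obtain b where b: "y = scale b w" using Hj w_def by (auto simp: span_singleton)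
        have uw: "u * w \<in> H (2*n)" using Hmul uv(1) wH ij by metis
        have vw: "v * w \<in> H (2*n)" using Hmul uv(2) wH ij by metis
        have "z * y = scale b (u * w + scale (- (a / c)) (v * w))"
          unfolding z_def b by (simp add: sc_l sc_r algebra_simps scale_minus_left)
        then have "alpha (z * y) = b * (a + (- (a / c)) * c)"
          using al_sc al_add uw vw subH subspace_scale subspace_add a_def c_def
          by (metis (no_types, lifting))
        also have "\<dots> = 0" using c0 by simp
        finally show False using y by simp
      qed
      then show "\<exists>c. u = scale c v" unfolding z_def by auto
    qed
  qed
qed

lemma Ralg:
  assumes "i \<le> 2*n" "u \<in> H i" "v \<in> H (2*n - i)" "u \<noteq> 0" "v \<noteq> 0"
  shows "u * v \<noteq> 0"
proof
  assume uv0: "u * v = 0"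
  obtain y where y: "y \<in> H (2*n - i)" "alpha (u * y) \<noteq> 0" using nd assms by blast
  obtain b where "y = scale b v" using L2 assms(3,5) y(1) unfolding lin1_def by blast
  then have "u * y = 0" using uv0 by (simp add: sc_r)
  then show False using y al_0 by simp
qed

lemma SP: assumes "i \<le> 2*n" "u \<in> H i" "u \<noteq> 0" shows "\<exists>v\<in>H (2*n - i). v \<noteq> 0"
  using nd[OF assms] al_0 by force


lemma pe_N: "degree f < N \<Longrightarrow> poly_eval scale x f = (\<Sum>i<N. scale (coeff f i) (x ^ i))"
  unfolding poly_eval_def
  by (rule sum.mono_neutral_left) (auto simp: coeff_eq_0)

lemma pe_add: "poly_eval scale x (f + g) = poly_eval scale x f + poly_eval scale x g"
proof -
  define N where "N = Suc (max (degree f) (degree g))"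
  have "degree (f + g) < N" unfolding N_def using degree_add_le_max[of f g] by simp
  then have "poly_eval scale x (f + g) = (\<Sum>i<N. scale (coeff (f + g) i) (x ^ i))" by (rule pe_N)
  also have "\<dots> = (\<Sum>i<N. scale (coeff f i) (x ^ i)) + (\<Sum>i<N. scale (coeff g i) (x ^ i))"
    by (simp add: scale_left_distrib sum.distrib)
  also have "\<dots> = poly_eval scale x f + poly_eval scale x g"
    using pe_N[where f=f and N=N and x=x] pe_N[where f=g and N=N and x=x] N_def by simp
  finally show ?thesis .
qed

lemma pe_monom: "poly_eval scale x (monom c k) = scale c (x ^ k)"
proof -
  have "degree (monom c k) < Suc k" using degree_monom_le[of c k] by simp
  then have "poly_eval scale x (monom c k) = (\<Sum>i<Suc k. scale (coeff (monom c k) i) (x ^ i))"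
    by (rule pe_N)
  also have "\<dots> = (\<Sum>i<Suc k. if k = i then scale c (x ^ i) else 0)"
    by (intro sum.cong refl) (simp add: coeff_monom)
  also have "\<dots> = scale c (x ^ k)" by simp
  finally show ?thesis .
qed

lemma pe_zero: "poly_eval scale x 0 = 0"
  unfolding poly_eval_def by simp

lemma xpowH: "x \<in> H d \<Longrightarrow> x ^ k \<in> H (k * d)"
proof (induction k)
  case 0 then show ?case using one_H by simp
next
  case (Suc k)
  then have "x * x ^ k \<in> H (d + k * d)" using Hmul by blast
  then show ?case by simp
qed

lemma final:
  assumes xH: "x \<in> H d" and p0: "0 < p" and nz: "\<forall>k<p. x ^ k \<noteq> 0" and xp: "x ^ p = 0"
    and dp: "0 < d \<or> p = 1" and st: "\<forall>i. \<forall>y\<in>H i. \<exists>k<p. \<exists>c. y = scale c (x ^ k)"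
  shows "(\<forall>y. \<exists>f. poly_eval scale x f = y) \<and> (\<forall>f. poly_eval scale x f = 0 \<longleftrightarrow> monom 1 p dvd f)"
proof (intro conjI allI)
  fix y
  obtain F where F: "\<forall>i. F i \<in> H i" "finite {i. F i \<noteq> 0}" "y = sum F {i. F i \<noteq> 0}"
    using Hdec by blast
  have "finite A \<Longrightarrow> sum F A \<in> range (poly_eval scale x)" for A
  proof (induction A rule: finite_induct)
    case empty then show ?case using pe_zero by (metis rangeI sum.empty)
  next
    case (insert a A)
    obtain g where g: "sum F A = poly_eval scale x g" using insert by blast
    obtain k c where "F a = scale c (x ^ k)" using st F(1) by blast
    then have "F a = poly_eval scale x (monom c k)" by (simp add: pe_monom)
    then have "sum F (insert a A) = poly_eval scale x (monom c k + g)"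
      using insert g by (simp add: pe_add)
    then show ?case by simp
  qed
  then show "\<exists>f. poly_eval scale x f = y" using F by (metis imageE)
next
  fix f
  have xbig: "x ^ i = 0" if "p \<le> i" for i
  proof -
    have "x ^ i = x ^ p * x ^ (i - p)" using that by (simp flip: power_add)
    then show ?thesis using xp by simp
  qed
  have pep: "poly_eval scale x f = (\<Sum>i<p. scale (coeff f i) (x ^ i))" for f
  proof -
    define N where "N = max (Suc (degree f)) p"
    have "poly_eval scale x f = (\<Sum>i<N. scale (coeff f i) (x ^ i))" by (rule pe_N) (simp add: N_def)
    also have "\<dots> = (\<Sum>i<p. scale (coeff f i) (x ^ i))"
      by (rule sum.mono_neutral_right) (auto simp: N_def xbig)
    finally show ?thesis .
  qed
  have indep: "\<forall>k<p. c k = 0" if hc: "(\<Sum>k<p. scale (c k) (x ^ k)) = 0" for c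
  proof (cases "p = 1")
    case True
    then have "scale (c 0) 1 = 0" using hc by simp
    then show ?thesis using True one_nz by simp
  next
    case False
    then have d0: "0 < d" using dp by simp
    define F where "F j = (if d dvd j \<and> j div d < p then scale (c (j div d)) (x ^ (j div d)) else 0)" for j
    have FH: "\<forall>j. F j \<in> H j"
    proof
      fix j
      show "F j \<in> H j"
      proof (cases "d dvd j \<and> j div d < p")
        case True
        then have "x ^ (j div d) \<in> H j" using xpowH[OF xH, of "j div d"] by simp
        then show ?thesis unfolding F_def using True subH subspace_scale by simp
      next
        case False
        then have "F j = 0" unfolding F_def by auto
        then show ?thesis using zero_H by simp
      qed
    qed
    have sub: "{j. F j \<noteq> 0} \<subseteq> (\<lambda>k. k * d) ` {..<p}"
    proof
      fix j assume "j \<in> {j. F j \<noteq> 0}"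
      then have "d dvd j" "j div d < p" unfolding F_def by (auto split: if_splits)
      then show "j \<in> (\<lambda>k. k * d) ` {..<p}" by (intro image_eqI[of _ _ "j div d"]) auto
    qed
    have finF: "finite {j. F j \<noteq> 0}" using finite_subset[OF sub] by simp
    have "sum F {j. F j \<noteq> 0} = sum F ((\<lambda>k. k * d) ` {..<p})"
      by (rule sum.mono_neutral_left) (use sub in auto)
    also have "\<dots> = (\<Sum>k<p. F (k * d))"
      by (rule sum.reindex_cong[of "\<lambda>k. k * d"]) (use d0 in \<open>auto simp: inj_on_def\<close>)
    also have "\<dots> = (\<Sum>k<p. scale (c k) (x ^ k))"
      by (intro sum.cong refl) (simp add: F_def d0)
    finally have sumF: "sum F {j. F j \<noteq> 0} = 0" using hc by simp
    have P1: "(\<forall>i. F i \<in> H i) \<and> finite {i. F i \<noteq> 0} \<and> 0 = sum F {i. F i \<noteq> 0}"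
      using FH finF sumF by simp
    have P2: "(\<forall>i. (\<lambda>_. 0) i \<in> H i) \<and> finite {i. (\<lambda>_. (0::'a)) i \<noteq> 0} \<and> 0 = sum (\<lambda>_. 0) {i. (\<lambda>_. (0::'a)) i \<noteq> 0}"
      using zero_H by simp
    obtain f0 where f0: "\<And>G. (\<forall>i. G i \<in> H i) \<and> finite {i. G i \<noteq> 0} \<and> 0 = sum G {i. G i \<noteq> 0} \<Longrightarrow> G = f0"
      using Hdec[rule_format, of 0] by (elim ex1E) blast
    have "F = (\<lambda>_. 0)" using f0[OF P1] f0[OF P2] by simp
    show ?thesis
    proof (intro allI impI)
      fix k assume "k < p"
      have "F (k * d) = scale (c k) (x ^ k)" by (simp add: F_def d0 \<open>k < p\<close>)
      then have "scale (c k) (x ^ k) = 0" using \<open>F = (\<lambda>_. 0)\<close> by simp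
      then show "c k = 0" using nz \<open>k < p\<close> by simp
    qed
  qed
  have "poly_eval scale x f = 0 \<longleftrightarrow> (\<forall>k<p. coeff f k = 0)"
  proof
    assume "poly_eval scale x f = 0"
    then show "\<forall>k<p. coeff f k = 0" using indep[of "coeff f"] pep by simp
  next
    assume "\<forall>k<p. coeff f k = 0"
    then show "poly_eval scale x f = 0" using pep by simp
  qed
  then show "poly_eval scale x f = 0 \<longleftrightarrow> monom 1 p dvd f" by (simp add: monom_1_dvd_iff')
qed


lemma main:
  "\<exists>d p x. x \<in> H d \<and> (\<forall>y. \<exists>f. poly_eval scale x f = y) \<and>
           (\<forall>f. poly_eval scale x f = 0 \<longleftrightarrow> monom 1 p dvd f)"
proof (cases "\<exists>i. 0 < i \<and> (\<exists>u\<in>H i. u \<noteq> 0)")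
  case False
  have st: "\<forall>i. \<forall>y\<in>H i. \<exists>k<1. \<exists>c. y = scale c ((0::'a) ^ k)"
  proof (intro allI ballI)
    fix i y assume y: "y \<in> H i"
    show "\<exists>k<1. \<exists>c. y = scale c ((0::'a) ^ k)"
    proof (cases "i = 0")
      case True
      then show ?thesis using y H0 by auto
    next
      case False
      then have "y = 0" using \<open>\<not> (\<exists>i. 0 < i \<and> (\<exists>u\<in>H i. u \<noteq> 0))\<close> y by blast
      then show ?thesis by (intro exI[of _ 0]) simp
    qed
  qed
  have "(\<forall>y. \<exists>f. poly_eval scale 0 f = y) \<and> (\<forall>f. poly_eval scale 0 f = 0 \<longleftrightarrow> monom 1 1 dvd f)"
    by (rule final[OF zero_H[of 0]]) (use st one_nz in auto)
  then show ?thesis using zero_H[of 0] by blast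
next
  case True
  define S where "S = {i. \<exists>u\<in>H i. u \<noteq> 0}"
  define d where "d = (LEAST i. i \<in> S \<and> 0 < i)"
  have dP: "d \<in> S \<and> 0 < d" unfolding d_def by (rule LeastI_ex) (use True S_def in auto)
  have dS: "d \<in> S" and d0: "0 < d" using dP by auto
  have dmin: "\<forall>i\<in>S. 0 < i \<longrightarrow> d \<le> i" unfolding d_def by (auto intro: Least_le)
  have S0: "0 \<in> S" unfolding S_def using one_H one_nz by blast
  have Sb: "\<forall>i\<in>S. i \<le> 2*n"
  proof
    fix i assume "i \<in> S"
    then obtain u where "u \<in> H i" "u \<noteq> 0" unfolding S_def by blast
    then show "i \<le> 2*n" using Hbig[of i] by (metis empty_iff insert_iff not_le)
  qed
  have SP': "\<forall>i\<in>S. 2*n - i \<in> S" unfolding S_def using SP Sb S_def by blast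
  have SQ: "\<forall>a\<in>S. \<forall>b\<in>S. a \<le> n \<longrightarrow> b \<le> n \<longrightarrow> a+b \<in> S"
  proof (intro ballI impI)
    fix a b assume "a \<in> S" "b \<in> S" "a \<le> n" "b \<le> n"
    then obtain u v where "u \<in> H a" "u \<noteq> 0" "v \<in> H b" "v \<noteq> 0" unfolding S_def by blast
    then have "u * v \<in> H (a + b)" "u * v \<noteq> 0" using Hmul Qalg \<open>a \<le> n\<close> \<open>b \<le> n\<close> by auto
    then show "a + b \<in> S" unfolding S_def by blast
  qed
  have cb: "(\<forall>i\<in>S. d dvd i) \<and> (\<forall>k. k*d \<le> 2*n \<longrightarrow> k*d \<in> S)"
    by (rule comb[OF S0 Sb SP' SQ dS d0 dmin])
  obtain x where xH: "x \<in> H d" and xnz: "x \<noteq> 0" using dS S_def by auto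
  have xnzk: "k * d \<le> 2*n \<Longrightarrow> x ^ k \<noteq> 0" for k
  proof (induction k)
    case 0 then show ?case using one_nz by simp
  next
    case (Suc k)
    have IH: "x ^ k \<noteq> 0" using Suc by simp
    have xk: "x ^ k \<in> H (k * d)" using xpowH[OF xH] .
    show ?case
    proof (cases "k = 0")
      case True then show ?thesis using xnz by simp
    next
      case knz: False
      show ?thesis
      proof (cases "k * d \<le> n")
        case True
        have "d \<le> k * d" using knz by simp
        then have "d \<le> n" using True by linarith
        then have "x ^ k * x \<noteq> 0" using Qalg[OF True _ xk xH IH xnz] by simp
        then show ?thesis by (simp add: mult.commute)
      next
        case False
        have "Suc k * d \<in> S" using cb Suc.prems by blast
        then have "2*n - Suc k * d \<in> S" using SP' by blast
        then obtain w where w: "w \<in> H (2*n - Suc k * d)" "w \<noteq> 0" unfolding S_def by blast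
        have l1: "2*n - Suc k * d \<le> n" using False by simp
        have "2 * d \<le> Suc k * d" using knz by simp
        then have dn: "d \<le> n" using Suc.prems by linarith
        have wx: "w * x \<noteq> 0" using Qalg[OF l1 dn w(1) xH w(2) xnz] .
        have "w * x \<in> H (2*n - Suc k * d + d)" using Hmul w(1) xH by blast
        moreover have "2*n - Suc k * d + d = 2*n - k * d" using Suc.prems by simp
        ultimately have wxH: "w * x \<in> H (2*n - k * d)" by simp
        have "k * d \<le> 2*n" using Suc.prems by simp
        then have "x ^ k * (w * x) \<noteq> 0" using Ralg[OF _ xk wxH IH wx] by simp
        then show ?thesis by (metis mult.assoc mult.commute mult_zero_left power_Suc)
      qed
    qed
  qed
  define p where "p = 2*n div d + 1"
  have p0: "0 < p" unfolding p_def by simp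
  have nz: "\<forall>k<p. x ^ k \<noteq> 0"
  proof (intro allI impI)
    fix k assume "k < p"
    then have "k \<le> 2*n div d" unfolding p_def by simp
    then have "k * d \<le> 2*n div d * d" by simp
    also have "\<dots> \<le> 2*n" by simp
    finally show "x ^ k \<noteq> 0" by (rule xnzk)
  qed
  have "2*n < p * d" unfolding p_def using d0
    by (metis div_mult_mod_eq add_less_cancel_left distrib_right mod_less_divisor mult_1)
  then have xp: "x ^ p = 0" using xpowH[OF xH, of p] Hbig by simp
  have st: "\<forall>i. \<forall>y\<in>H i. \<exists>k<p. \<exists>c. y = scale c (x ^ k)"
  proof (intro allI ballI)
    fix i y assume y: "y \<in> H i"
    show "\<exists>k<p. \<exists>c. y = scale c (x ^ k)"
    proof (cases "y = 0")
      case True then show ?thesis using p0 by (intro exI[of _ 0]) simp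
    next
      case False
      then have iS: "i \<in> S" unfolding S_def using y by blast
      then obtain k where k: "i = k * d" using cb by (metis dvdE mult.commute)
      have "k * d \<le> 2 * n" using Sb iS k by simp
      then have "k \<le> 2*n div d" using d0 by (metis div_le_mono nonzero_mult_div_cancel_right not_gr0)
      then have kp: "k < p" unfolding p_def by simp
      have "x ^ k \<in> H i" using xpowH[OF xH] k by simp
      moreover have "x ^ k \<noteq> 0" using nz kp by simp
      ultimately obtain c where "y = scale c (x ^ k)" using L2 y unfolding lin1_def by blast
      then show ?thesis using kp by blast
    qed
  qed
  have "(\<forall>y. \<exists>f. poly_eval scale x f = y) \<and> (\<forall>f. poly_eval scale x f = 0 \<longleftrightarrow> monom 1 p dvd f)"
    by (rule final[OF xH p0 nz xp _ st]) (use d0 in simp)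
  then show ?thesis using xH by blast
qed

end

theorem lemma3p8:
  fixes scale :: "'k::field_char_0 \<Rightarrow> 'a::comm_ring_1 \<Rightarrow> 'a"
    and H :: "nat \<Rightarrow> 'a set"
    and n :: nat
  assumes "fin_graded_algebra scale H"
    and "poincare scale H (2 * n)"
    and "H 0 = range (\<lambda>c. scale c 1)" and "(1::'a) \<noteq> 0"
    and "\<forall>i. (odd i \<or> i > 2 * n) \<longrightarrow> H i = {0}"
    and "\<forall>i j. i \<le> n \<longrightarrow> j \<le> n \<longrightarrow> mult_injective scale H i j"
  shows "\<exists>d p x. x \<in> H d \<and> (\<forall>y. \<exists>f. poly_eval scale x f = y) \<and>
           (\<forall>f. poly_eval scale x f = 0 \<longleftrightarrow> monom 1 p dvd f)"
proof -
  interpret PA scale H n by (rule PA.intro) (rule assms)+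
  show ?thesis by (rule main)
qed

end
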